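(* Fix $y$ with $\phi_0(y)\neq0$. Define $\gamma_0(y)=1/\phi_0(y)$ and, recursively for $n\ge1$, $$\gamma_n(y)=-\frac{1}{\phi_0(y)}\sum_{j=1}^{n}\binom{n}{j}\phi_j(y)\,\gamma_{n-j}(y).$$ Then, for every $x$, $${}_G\lambda_0^{R}(x,y)=\frac{1}{\gamma_0(y)}\,\Gamma(R+I)\,\Gamma(2R+I)^{-1}.$$ Moreover, for every $n\ge1$, $${}_G\lambda_n^{R}(x,y)=\frac{(-1)^n}{\gamma_0(y)^{n+1}}\det M_n,$$ where $M_n$ is the $(n+1)\times(n+1)$ array with rows indexed $i=0,\dots,n$ and columns indexed $k=0,\dots,n$, as follows: - Row $0$ is $\big(\lambda_0^R(x),\lambda_1^R(x),\dots,\lambda_n^R(x)\big)$, where $\lambda_0^R(x)=\Gamma(R+I)\Gamma(2R+I)^{-1}$. - For $1\le i\le n$, the entries of row $i$ are $$(M_n)_{i,k}=\binom{k}{i-1}\gamma_{k-i+1}(y)\ \text{ if } k\ge i-1,\qquad (M_n)_{i,k}=0\ \text{ otherwise}.$$ For example, row $1$ is $(\gamma_0,\gamma_1,\dots,\gamma_n)$, row $2$ is $(0,\gamma_0,2\gamma_1,\dots,\binom{n}{1}\gamma_{n-1})$, and the last row is $(0,\dots,0,\gamma_0,\binom{n}{1}\gamma_1)$. Only row $0$ has matrix entries, so $\det M_n$ is understood as the Laplace expansion along row $0$: $$\det M_n=\sum_{k=0}^n(-1)^k\lambda_k^R(x)\,\det M_n^{(0,k)},$$ where $M_n^{(0,k)}$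 is the scalar minor obtained by deleting row $0$ and column $k$.
   Context: Let $N\ge 1$ and let $R\in\mathbb{C}^{N\times N}$ be positive stable, i.e. every eigenvalue of $R$ has positive real part. $I$ denotes the $N\times N$ identity matrix, and $\Gamma$ of a matrix is defined by the holomorphic functional calculus. For such $R$ and every integer $j\ge0$ the matrix $\Gamma(2R+(2j+1)I)$ is invertible. Put $$c_j(R)=\Gamma(R+(j+1)I)\,\Gamma(2R+(2j+1)I)^{-1}\qquad (j\ge 0).$$ The one-variable $\lambda$-matrix polynomials are $$\lambda_n^R(x)=\sum_{j=0}^n\binom{n}{j}(-1)^j c_j(R)\,x^{n-j}.$$ Let $(\phi_n(y))_{n\ge0}$ be a sequence of complex-valued functions of a variable $y$. The 2-variable general-$\lambda$-matrix polynomials are defined by $${}_G\lambda_n^R(x,y)=\sum_{\substack{a,b,c\ge0\\ a+b+c=n}}\frac{n!}{a!\,b!\,c!}\,x^a\,\phi_b(y)\,(-1)^c\,c_c(R).$$ *)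

theory Defs
  imports "HOL-Complex_Analysis.Complex_Analysis"
begin

definition mat_spectrum :: "complex^'n^'n \<Rightarrow> complex set" where
  "mat_spectrum A = {z. \<exists>v. v \<noteq> 0 \<and> A *v v = z *s v}"

definition positive_stable :: "complex^'n^'n \<Rightarrow> bool" where
  "positive_stable A \<longleftrightarrow> (\<forall>z\<in>mat_spectrum A. 0 < Re z)"

text \<open>The circle is chosen by Hilbert choice;
  by Cauchy's theorem the value does not depend on the choice.\<close>

definition hfc_circle ::
  "(complex \<Rightarrow> complex) \<Rightarrow> complex^'n^'n \<Rightarrow> complex \<Rightarrow> real \<Rightarrow> complex^'n^'n" where
  "hfc_circle f A c r =
     (\<chi> i j. contour_integral (circlepath c r)
                (\<lambda>z. f z * (matrix_inv (mat z - A)) $ i $ j) / (2 * of_real pi * \<i>))"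

definition mat_fun :: "(complex \<Rightarrow> complex) \<Rightarrow> complex^'n^'n \<Rightarrow> complex^'n^'n" where
  "mat_fun f A =
     (let (c, r) = (SOME (c, r). 0 < r \<and> mat_spectrum A \<subseteq> ball c r \<and> f holomorphic_on cball c r)
      in hfc_circle f A c r)"

definition mat_Gamma :: "complex^'n^'n \<Rightarrow> complex^'n^'n" where
  "mat_Gamma A = mat_fun Gamma A"

definition cR :: "complex^'n^'n \<Rightarrow> nat \<Rightarrow> complex^'n^'n" where
  "cR R j = mat_Gamma (R + mat (of_nat (j + 1)))
            ** matrix_inv (mat_Gamma (2 *\<^sub>R R + mat (of_nat (2 * j + 1))))"

definition lambdaR :: "complex^'n^'n \<Rightarrow> nat \<Rightarrow> complex \<Rightarrow> complex^'n^'n" where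
  "lambdaR R n x = (\<Sum>j\<le>n. mat (of_nat (n choose j) * (-1) ^ j * x ^ (n - j)) ** cR R j)"

definition G_lambda ::
  "(nat \<Rightarrow> 'b \<Rightarrow> complex) \<Rightarrow> complex^'n^'n \<Rightarrow> nat \<Rightarrow> complex \<Rightarrow> 'b \<Rightarrow> complex^'n^'n" where
  "G_lambda \<phi> R n x y =
     (\<Sum>(a, b, c) \<in> {(a, b, c). a + b + c = n}.
        mat (fact n / (fact a * fact b * fact c) * x ^ a * \<phi> b y * (-1) ^ c) ** cR R c)"

fun gam :: "(nat \<Rightarrow> 'b \<Rightarrow> complex) \<Rightarrow> 'b \<Rightarrow> nat \<Rightarrow> complex" where
  "gam \<phi> y 0 = 1 / \<phi> 0 y"
| "gam \<phi> y (Suc n) =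
     - (1 / \<phi> 0 y) * (\<Sum>j\<in>{1..Suc n}. of_nat (Suc n choose j) * \<phi> j y * gam \<phi> y (Suc n - j))"

definition detn :: "nat \<Rightarrow> (nat \<Rightarrow> nat \<Rightarrow> complex) \<Rightarrow> complex" where
  "detn n A = (\<Sum>p | p permutes {..<n}. of_int (sign p) * (\<Prod>i<n. A i (p i)))"

text \<open>Scalar rows i = 1..n of M_n (rows/columns indexed from 0).\<close>
definition Mrow :: "(nat \<Rightarrow> complex) \<Rightarrow> nat \<Rightarrow> nat \<Rightarrow> complex" where
  "Mrow g i k = (if i - 1 \<le> k then of_nat (k choose (i - 1)) * g (k - (i - 1)) else 0)"

text \<open>Minor of M_n obtained by deleting row 0 and column k, as an n x n array.\<close>
definition Mminor :: "(nat \<Rightarrow> complex) \<Rightarrow> nat \<Rightarrow> nat \<Rightarrow> nat \<Rightarrow> complex" where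
  "Mminor g k i' k' = Mrow g (Suc i') (if k' < k then k' else Suc k')"

end

theory Submission imports Defs "Jordan_Normal_Form.Determinant" begin

definition Bm :: "(nat \<Rightarrow> complex) \<Rightarrow> nat \<Rightarrow> nat \<Rightarrow> complex" where
  "Bm g i c = (if i \<le> c then of_nat (c choose i) * g (c - i) else 0)"

definition sig :: "nat \<Rightarrow> nat \<Rightarrow> nat \<Rightarrow> nat" where
  "sig n k j = (if j < k then j else if j < n - 1 then Suc j else k)"

lemma detn_det: "detn n f = Determinant.det (Matrix.mat n n (\<lambda>(i,j). f i j))"
  unfolding detn_def
  by (subst det_def'[of _ n]) (auto intro!: sum.cong prod.cong simp: atLeast0LessThan permutes_def)

lemma det_UT: "Determinant.det (Matrix.mat n n (\<lambda>(i,j). Bm g i j)) = g 0 ^ n"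
proof -
  have "Determinant.det (Matrix.mat n n (\<lambda>(i,j). Bm g i j))
      = prod_list (diag_mat (Matrix.mat n n (\<lambda>(i,j). Bm g i j)))"
    by (rule det_upper_triangular) (auto simp: upper_triangular_def Bm_def)
  also have "\<dots> = g 0 ^ n"
  proof -
    have "map (\<lambda>x. Matrix.mat n n (\<lambda>(i,j). Bm g i j) $$ (x,x)) [0..<n] = replicate n (g 0)"
      by (rule nth_equalityI) (auto simp: Bm_def)
    then show ?thesis by (simp add: diag_mat_def prod_list_replicate)
  qed
  finally show ?thesis .
qed

lemma det_sig: "k < n \<Longrightarrow>
  Determinant.det (Matrix.mat n n (\<lambda>(i,j). Bm g i (sig n k j))) = (-1) ^ (n - 1 - k) * g 0 ^ n"
proof (induction n)
  case 0 then show ?case by simp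
next
  case (Suc m)
  show ?case
  proof (cases "k = m")
    case True
    have "Matrix.mat (Suc m) (Suc m) (\<lambda>(i,j). Bm g i (sig (Suc m) k j))
        = Matrix.mat (Suc m) (Suc m) (\<lambda>(i,j). Bm g i j)"
      by (rule eq_matI) (auto simp: sig_def True less_Suc_eq)
    then show ?thesis using det_UT[of "Suc m" g] True by simp
  next
    case False
    hence km: "k < m" using Suc.prems by simp
    define A where "A = Matrix.mat (Suc m) (Suc m) (\<lambda>(i,j). Bm g i (sig (Suc m) k j))"
    have A: "A \<in> carrier_mat (Suc m) (Suc m)" by (simp add: A_def)
    have "Determinant.det A = (\<Sum>j<Suc m. A $$ (m,j) * cofactor A m j)"
      by (rule laplace_expansion_row[OF A]) simp
    also have "\<dots> = A $$ (m, m-1) * cofactor A m (m-1)"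
    proof -
      have "(\<Sum>j<Suc m. A $$ (m,j) * cofactor A m j)
         = A $$ (m, m-1) * cofactor A m (m-1) + (\<Sum>j\<in>{..<Suc m} - {m-1}. A $$ (m,j) * cofactor A m j)"
        by (subst sum.remove[of _ "m-1"]) auto
      moreover have "(\<Sum>j\<in>{..<Suc m} - {m-1}. A $$ (m,j) * cofactor A m j) = 0"
        using km by (intro sum.neutral) (auto simp: A_def Bm_def sig_def)
      ultimately show ?thesis by simp
    qed
    finally have dA: "Determinant.det A = A $$ (m, m-1) * cofactor A m (m-1)" .
    have a1: "A $$ (m, m-1) = g 0" using km by (simp add: A_def Bm_def sig_def)
    have a2: "mat_delete A m (m-1) = Matrix.mat m m (\<lambda>(i,j). Bm g i (sig m k j))"
      using km by (intro eq_matI) (auto simp: A_def mat_delete_def sig_def)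
    have a3: "(-1::complex) ^ (m + (m - 1)) = -1"
    proof -
      have "m + (m - 1) = 2 * (m - 1) + 1" using km by simp
      then show ?thesis by (simp add: power_add power_mult)
    qed
    have a4: "(-1::complex) ^ (Suc m - 1 - k) = - ((-1) ^ (m - 1 - k))"
    proof -
      have "Suc m - 1 - k = Suc (m - 1 - k)" using km by simp
      then show ?thesis by simp
    qed
    show ?thesis
      using dA a1 a2 a3 a4 Suc.IH[OF km] unfolding A_def cofactor_def by simp
  qed
qed
lemma Mrow_Bm: "Mrow g (Suc i) c = Bm g i c"
  by (simp add: Mrow_def Bm_def)

lemma sig_bij: assumes "k < n" shows "bij_betw (sig n k) {..<n} {..<n}"
proof -
  have im: "sig n k ` {..<n} \<subseteq> {..<n}" using assms by (auto simp: sig_def)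
  have inj: "inj_on (sig n k) {..<n}" using assms
    by (auto simp: inj_on_def sig_def split: if_splits)
  show ?thesis using endo_inj_surj[OF _ im inj] inj by (simp add: bij_betw_def)
qed

lemma det_minor_lt:
  assumes kn: "k < n" and u: "\<And>i. i < n \<Longrightarrow> Bm g i n = (\<Sum>l<n. u l * Bm g i l)"
  shows "detn n (Mminor g k) = u k * (-1)^(n-1-k) * g 0 ^ n"
proof -
  define A where "A = Matrix.mat n n (\<lambda>(i,j). Bm g i (sig n k j))"
  define x where "x = Matrix.vec n (\<lambda>j. u (sig n k j))"
  have A: "A \<in> carrier_mat n n" by (simp add: A_def)
  have x: "x \<in> carrier_vec n" by (simp add: x_def)
  have Ax: "(A *\<^sub>v x) $ i = Bm g i n" if i: "i < n" for i
  proof -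
    have "(A *\<^sub>v x) $ i = (\<Sum>j<n. Bm g i (sig n k j) * u (sig n k j))"
      using i by (auto simp: A_def x_def scalar_prod_def atLeast0LessThan intro!: sum.cong)
    also have "\<dots> = (\<Sum>l<n. Bm g i l * u l)"
      using sum.reindex_bij_betw[OF sig_bij[OF kn], of "\<lambda>l. Bm g i l * u l"] by simp
    also have "\<dots> = Bm g i n" using u[OF i] by (simp add: mult.commute)
    finally show ?thesis .
  qed
  have eq: "Matrix.mat n n (\<lambda>(i,j). Mminor g k i j) = replace_col A (A *\<^sub>v x) (n-1)"
    apply (rule eq_matI)
    using kn A apply (auto simp: replace_col_def Ax Mminor_def Mrow_Bm simp del: index_mult_mat_vec)
    apply (auto simp: A_def sig_def)
    done
  have "detn n (Mminor g k) = x $ (n-1) * Determinant.det A"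
    unfolding detn_det eq using kn by (intro cramer_lemma_mat[OF A x]) simp
  also have "x $ (n-1) = u k" using kn by (auto simp: x_def sig_def)
  also have "Determinant.det A = (-1)^(n-1-k) * g 0 ^ n" unfolding A_def by (rule det_sig[OF kn])
  finally show ?thesis by simp
qed

lemma det_minor_n: "detn n (Mminor g n) = g 0 ^ n"
proof -
  have "Matrix.mat n n (\<lambda>(i,j). Mminor g n i j) = Matrix.mat n n (\<lambda>(i,j). Bm g i j)"
    by (rule eq_matI) (auto simp: Mminor_def Mrow_Bm)
  then show ?thesis by (simp add: detn_det det_UT)
qed
lemma gam_conv:
  assumes p0: "\<phi> 0 y \<noteq> 0" and N: "1 \<le> N"
  shows "(\<Sum>m\<le>N. of_nat (N choose m) * gam \<phi> y m * \<phi> (N - m) y) = 0"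
proof -
  obtain M where M: "N = Suc M" using N by (cases N) auto
  have rec: "gam \<phi> y N = - (1 / \<phi> 0 y) * (\<Sum>j\<in>{1..N}. of_nat (N choose j) * \<phi> j y * gam \<phi> y (N - j))"
    using M by simp
  have "(\<Sum>j\<le>N. of_nat (N choose j) * \<phi> j y * gam \<phi> y (N - j))
      = \<phi> 0 y * gam \<phi> y N + (\<Sum>j\<in>{1..N}. of_nat (N choose j) * \<phi> j y * gam \<phi> y (N - j))"
    by (simp add: atMost_atLeast0 sum.atLeast_Suc_atMost)
  also have "\<dots> = 0" using p0 by (subst rec) (simp add: field_simps)
  finally have z: "(\<Sum>j\<le>N. of_nat (N choose j) * \<phi> j y * gam \<phi> y (N - j)) = 0" .
  have "(\<Sum>m\<le>N. of_nat (N choose m) * gam \<phi> y m * \<phi> (N - m) y)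
      = (\<Sum>j\<le>N. of_nat (N choose (N - j)) * gam \<phi> y (N - j) * \<phi> (N - (N - j)) y)"
    unfolding atMost_atLeast0 by (subst sum.atLeastAtMost_rev) simp
  also have "\<dots> = (\<Sum>j\<le>N. of_nat (N choose j) * \<phi> j y * gam \<phi> y (N - j))"
    by (intro sum.cong refl) (simp add: binomial_symmetric[symmetric])
  finally show ?thesis using z by simp
qed

lemma kernel:
  assumes p0: "\<phi> 0 y \<noteq> 0" and i: "i < n"
  shows "(\<Sum>l\<le>n. of_nat (n choose l) * \<phi> (n - l) y * Bm (gam \<phi> y) i l) = 0"
proof -
  let ?g = "gam \<phi> y"
  have "(\<Sum>l\<le>n. of_nat (n choose l) * \<phi> (n - l) y * Bm ?g i l)
      = (\<Sum>l\<in>{i..n}. of_nat (n choose l) * \<phi> (n - l) y * Bm ?g i l)"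
    by (rule sum.mono_neutral_right) (auto simp: Bm_def)
  also have "\<dots> = (\<Sum>l\<in>{i..n}. of_nat (n choose i) * (of_nat ((n - i) choose (l - i)) * ?g (l - i) * \<phi> (n - i - (l - i)) y))"
  proof (intro sum.cong refl)
    fix l assume l: "l \<in> {i..n}"
    have c: "(n choose l) * (l choose i) = (n choose i) * ((n - i) choose (l - i))"
      using l by (intro choose_mult) auto
    have c': "of_nat (n choose l) * of_nat (l choose i) = (of_nat (n choose i) * of_nat ((n - i) choose (l - i)) :: complex)"
      using c by (metis of_nat_mult)
    have "n - l = n - i - (l - i)" using l by auto
    then show "of_nat (n choose l) * \<phi> (n - l) y * Bm ?g i l = of_nat (n choose i) * (of_nat ((n - i) choose (l - i)) * ?g (l - i) * \<phi> (n - i - (l - i)) y)"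
      using l c' by (simp add: Bm_def)
  qed
  also have "\<dots> = of_nat (n choose i) * (\<Sum>l\<in>{i..n}. of_nat ((n - i) choose (l - i)) * ?g (l - i) * \<phi> (n - i - (l - i)) y)"
    by (simp add: sum_distrib_left)
  also have "(\<Sum>l\<in>{i..n}. of_nat ((n - i) choose (l - i)) * ?g (l - i) * \<phi> (n - i - (l - i)) y)
      = (\<Sum>m\<le>n - i. of_nat ((n - i) choose m) * ?g m * \<phi> (n - i - m) y)"
  proof -
    have "{i..n} = {0 + i..(n - i) + i}" using i by simp
    then show ?thesis unfolding atMost_atLeast0 by (simp only: sum.shift_bounds_cl_nat_ivl) simp
  qed
  also have "\<dots> = 0" using gam_conv[of \<phi> y "n - i", OF p0] i by simp
  finally show ?thesis by simp
qed

lemma coef: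
  assumes p0: "\<phi> 0 y \<noteq> 0" and n: "1 \<le> n" and k: "k \<le> n"
  shows "(-1) ^ n / gam \<phi> y 0 ^ (n + 1) * ((-1) ^ k * detn n (Mminor (gam \<phi> y) k))
       = of_nat (n choose k) * \<phi> (n - k) y"
proof -
  let ?g = "gam \<phi> y"
  have g0: "?g 0 = 1 / \<phi> 0 y" by simp
  have g0nz: "?g 0 \<noteq> 0" using p0 by simp
  show ?thesis
  proof (cases "k = n")
    case True
    have "(-1::complex) ^ n * (-1) ^ n = 1" by (simp add: power_add[symmetric] power_mult[symmetric] mult_2[symmetric])
    then show ?thesis using True g0nz p0 by (simp add: det_minor_n field_simps)
  next
    case False
    hence kn: "k < n" using k by simp
    define u where "u l = - (of_nat (n choose l) * \<phi> (n - l) y) * ?g 0" for l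
    have u: "Bm ?g i n = (\<Sum>l<n. u l * Bm ?g i l)" if i: "i < n" for i
    proof -
      have "(\<Sum>l\<le>n. of_nat (n choose l) * \<phi> (n - l) y * Bm ?g i l)
          = (\<Sum>l<n. of_nat (n choose l) * \<phi> (n - l) y * Bm ?g i l) + \<phi> 0 y * Bm ?g i n"
        by (simp add: lessThan_Suc_atMost[symmetric])
      then have "(\<Sum>l<n. of_nat (n choose l) * \<phi> (n - l) y * Bm ?g i l) + \<phi> 0 y * Bm ?g i n = 0"
        using kernel[of \<phi> y i n, OF p0 i] by simp
      then have "Bm ?g i n = - (\<Sum>l<n. of_nat (n choose l) * \<phi> (n - l) y * Bm ?g i l) / \<phi> 0 y"
        using p0 by (simp add: field_simps) (simp add: eq_neg_iff_add_eq_0)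
      also have "\<dots> = (\<Sum>l<n. u l * Bm ?g i l)"
        by (simp add: u_def sum_divide_distrib sum_negf[symmetric] field_simps)
      finally show ?thesis .
    qed
    have d: "detn n (Mminor ?g k) = u k * (-1)^(n-1-k) * ?g 0 ^ n"
      by (rule det_minor_lt[OF kn u])
    have s: "(-1::complex) ^ n * (-1) ^ k * (-1) ^ (n - 1 - k) = -1"
    proof -
      have "n + k + (n - 1 - k) = 2 * (n - 1) + 1" using kn by simp
      then show ?thesis by (simp add: power_add[symmetric] power_mult)
    qed
    have "(-1) ^ n / ?g 0 ^ (n + 1) * ((-1) ^ k * detn n (Mminor ?g k))
        = ((-1::complex) ^ n * (-1) ^ k * (-1) ^ (n - 1 - k)) * (- of_nat (n choose k) * \<phi> (n - k) y) * (?g 0 ^ (n+1) / ?g 0 ^ (n + 1))"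
      unfolding d u_def by (simp add: field_simps)
    also have "\<dots> = of_nat (n choose k) * \<phi> (n - k) y" using s g0nz by simp
    finally show ?thesis .
  qed
qed
hide_const (open) Matrix.mat Determinant.det Matrix.row Matrix.col Matrix.vec Matrix.transpose_mat
no_notation Matrix.vec_index (infixl \<open>$\<close> 100)
no_notation fps_nth (infixl \<open>$\<close> 75)

lemma mat_mul_comp: "(mat a ** A) $ r $ s = a * (A $ r $ s)"
  for A :: "'a::comm_ring_1^'n^'m"
proof -
  have "(mat a ** A) $ r $ s = (\<Sum>k\<in>UNIV. (if r = k then a else 0) * A $ k $ s)"
    by (simp add: matrix_matrix_mult_def Finite_Cartesian_Product.mat_def)
  also have "\<dots> = (\<Sum>k\<in>UNIV. if r = k then a * A $ k $ s else 0)"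
    by (rule sum.cong) auto
  also have "\<dots> = a * A $ r $ s" by (simp add: sum.delta)
  finally show ?thesis .
qed

lemma lambdaR_comp: "lambdaR R k x $ r $ s
   = (\<Sum>j\<le>k. of_nat (k choose j) * (-1) ^ j * x ^ (k - j) * (cR R j $ r $ s))"
  by (simp add: lambdaR_def mat_mul_comp)

lemma G_comp: "G_lambda \<phi> R n x y $ r $ s
   = (\<Sum>k\<le>n. of_nat (n choose k) * \<phi> (n - k) y * (lambdaR R k x $ r $ s))"
proof -
  let ?S = "{(a, b, c). a + b + c = n} :: (nat \<times> nat \<times> nat) set"
  let ?T = "Sigma {..n} (\<lambda>k. {..k})"
  let ?h = "\<lambda>(a, b, c). fact n / (fact a * fact b * fact c) * x ^ a * \<phi> b y * (-1) ^ c * (cR R c $ r $ s)"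
  let ?g = "\<lambda>(k, j). of_nat (n choose k) * \<phi> (n - k) y * (of_nat (k choose j) * (-1) ^ j * x ^ (k - j) * (cR R j $ r $ s))"
  have "G_lambda \<phi> R n x y $ r $ s = sum ?h ?S"
    unfolding G_lambda_def by (simp add: mat_mul_comp case_prod_unfold)
  also have "\<dots> = sum ?g ?T"
  proof (rule sum.reindex_bij_witness[where j = "\<lambda>(a, b, c). (a + c, c)" and i = "\<lambda>(k, j). (k - j, n - k, j)"])
    fix t assume "t \<in> ?S"
    then obtain a b c where t: "t = (a, b, c)" "a + b + c = n" by auto
    have f: "(fact n / (fact a * fact b * fact c) :: complex) = of_nat (n choose (a + c)) * of_nat ((a + c) choose c)"
    proof -
      have e1: "n - (a + c) = b" "a + c - c = a" using t by auto
      show ?thesis using t(2) by (simp add: binomial_fact e1 field_simps)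
    qed
    have e2: "n - (a + c) = b" "a + c - c = a" using t by auto
    show "?g (case t of (a, b, c) \<Rightarrow> (a + c, c)) = ?h t"
      using t f e2 by (simp add: field_simps)
  qed auto
  also have "\<dots> = (\<Sum>k\<le>n. of_nat (n choose k) * \<phi> (n - k) y * (lambdaR R k x $ r $ s))"
    by (simp add: sum.Sigma[symmetric] lambdaR_comp sum_distrib_left)
  finally show ?thesis .
qed

theorem theorem3p2:
  fixes R :: "complex^'n^'n" and \<phi> :: "nat \<Rightarrow> 'b \<Rightarrow> complex" and y :: 'b
  assumes "positive_stable R"
    and "\<phi> 0 y \<noteq> 0"
  shows "(\<forall>x. G_lambda \<phi> R 0 x y
              = mat (1 / gam \<phi> y 0) ** (mat_Gamma (R + mat 1) ** matrix_inv (mat_Gamma (2 *\<^sub>R R + mat 1))))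
       \<and> (\<forall>n\<ge>1. \<forall>x. G_lambda \<phi> R n x y
              = mat ((-1) ^ n / gam \<phi> y 0 ^ (n + 1))
                ** (\<Sum>k\<le>n. mat ((-1) ^ k * detn n (Mminor (gam \<phi> y) k)) ** lambdaR R k x))"
proof (intro conjI allI impI)
  fix x
  show "G_lambda \<phi> R 0 x y
              = mat (1 / gam \<phi> y 0) ** (mat_Gamma (R + mat 1) ** matrix_inv (mat_Gamma (2 *\<^sub>R R + mat 1)))"
    by (simp add: Finite_Cartesian_Product.vec_eq_iff G_comp lambdaR_comp mat_mul_comp cR_def)
next
  fix n :: nat and x assume n: "1 \<le> n"
  show "G_lambda \<phi> R n x y
              = mat ((-1) ^ n / gam \<phi> y 0 ^ (n + 1))
                ** (\<Sum>k\<le>n. mat ((-1) ^ k * detn n (Mminor (gam \<phi> y) k)) ** lambdaR R k x)"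
  proof (simp only: Finite_Cartesian_Product.vec_eq_iff, intro allI)
    fix r s
    have "(mat ((-1) ^ n / gam \<phi> y 0 ^ (n + 1))
                ** (\<Sum>k\<le>n. mat ((-1) ^ k * detn n (Mminor (gam \<phi> y) k)) ** lambdaR R k x)) $ r $ s
        = (\<Sum>k\<le>n. ((-1) ^ n / gam \<phi> y 0 ^ (n + 1) * ((-1) ^ k * detn n (Mminor (gam \<phi> y) k))) * (lambdaR R k x $ r $ s))"
      by (simp add: mat_mul_comp sum_distrib_left mult.assoc)
    also have "\<dots> = (\<Sum>k\<le>n. of_nat (n choose k) * \<phi> (n - k) y * (lambdaR R k x $ r $ s))"
    proof (intro sum.cong refl)
      fix k assume "k \<in> {..n}"
      then have "k \<le> n" by simp
      from coef[of \<phi> y n k, OF assms(2) n this]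
      show "((-1) ^ n / gam \<phi> y 0 ^ (n + 1) * ((-1) ^ k * detn n (Mminor (gam \<phi> y) k))) * (lambdaR R k x $ r $ s)
          = of_nat (n choose k) * \<phi> (n - k) y * (lambdaR R k x $ r $ s)" by (simp only:)
    qed
    finally show "G_lambda \<phi> R n x y $ r $ s = (mat ((-1) ^ n / gam \<phi> y 0 ^ (n + 1))
                ** (\<Sum>k\<le>n. mat ((-1) ^ k * detn n (Mminor (gam \<phi> y) k)) ** lambdaR R k x)) $ r $ s"
      by (simp add: G_comp)
  qed
qed
end
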